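(* For every partition $\mathcal P=(S_1,\dots,S_n)$ of $V(G)$ into sets of size $r$ and $T=T_{\vec B,\mathcal P}$, $$|\mathbb E_{\vec B}(\xi)|\le\frac1{nr(r-1)}\sum_{i=1}^n\sum_{\{w,w'\}\subseteq S_i,\,w\ne w'}\big(W_w(w')+W_{w'}(w)\big).$$
   Context: Let $n,p,q$ be positive integers, $r=p+q$, $G$ a finite simple graph with $|V(G)|=rn$; $\mathcal N(v)$ neighbor set. For each $v$, $f_v:2^{\mathcal N(v)}\to\mathbb R$ with $f_v(\emptyset)=0$. $\sigma_T(v)=q$ if $v\in T$, $-p$ otherwise; for $|T|=pn$, $\xi=\frac1{pqn}\sum_v\sigma_T(v)f_v(T\cap\mathcal N(v))$. Weight of $w$ on $v$: $W_v(w)=\sup_{A\subseteq\mathcal N(v)\setminus\{w\}}|f_v(A)-f_v(A\cup\{w\})|$ if $w\in\mathcal N(v)$, and $W_v(w)=0$ otherwise. Restricted randomization: $S_i=\{w_i^1,\dots,w_i^r\}$, $B_1,\dots,B_n$ i.i.d. uniform $p$-subsets of $\{1,\dots,r\}$, $T_{\vec B,\mathcal P}=\{w_i^j:j\in B_i\}$. *)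

theory Defs
  imports Complex_Main "HOL-Library.FuncSet"
begin

text \<open>Simple graph on a finite vertex set V given by an edge relation E
  (assumed symmetric and irreflexive in the theorem).\<close>

definition nbhd :: "('a \<Rightarrow> 'a \<Rightarrow> bool) \<Rightarrow> 'a set \<Rightarrow> 'a \<Rightarrow> 'a set" where
  "nbhd E V v = {u \<in> V. E v u}"

definition weight :: "('a \<Rightarrow> 'a \<Rightarrow> bool) \<Rightarrow> 'a set \<Rightarrow> ('a \<Rightarrow> 'a set \<Rightarrow> real) \<Rightarrow> 'a \<Rightarrow> 'a \<Rightarrow> real" where
  "weight E V f v w =
     (if w \<in> nbhd E V v
      then (SUP A \<in> {A. A \<subseteq> nbhd E V v - {w}}. \<bar>f v A - f v (A \<union> {w})\<bar>)
      else 0)"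

definition sgn_T :: "nat \<Rightarrow> nat \<Rightarrow> 'a set \<Rightarrow> 'a \<Rightarrow> real" where
  "sgn_T p q T v = (if v \<in> T then real q else - real p)"

definition xi :: "('a \<Rightarrow> 'a \<Rightarrow> bool) \<Rightarrow> 'a set \<Rightarrow> ('a \<Rightarrow> 'a set \<Rightarrow> real)
                 \<Rightarrow> nat \<Rightarrow> nat \<Rightarrow> nat \<Rightarrow> 'a set \<Rightarrow> real" where
  "xi E V f p q n T =
     (1 / (real p * real q * real n)) * (\<Sum>v\<in>V. sgn_T p q T v * f v (T \<inter> nbhd E V v))"

definition psubsets :: "nat \<Rightarrow> nat \<Rightarrow> nat set set" where
  "psubsets r p = {B. B \<subseteq> {1..r} \<and> card B = p}"

text \<open>T_{B,P} = {w_i^j : j in B_i}, where w i j is the j-th vertex of block S_i.\<close>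
definition restrT :: "(nat \<Rightarrow> nat \<Rightarrow> 'a) \<Rightarrow> nat \<Rightarrow> (nat \<Rightarrow> nat set) \<Rightarrow> 'a set" where
  "restrT w n B = {w i j | i j. i \<in> {1..n} \<and> j \<in> B i}"

text \<open>Expectation of xi over B_1,...,B_n i.i.d. uniform p-subsets of {1..r},
  i.e. the uniform average over all tuples (B_1,...,B_n).\<close>
definition expected_xi :: "('a \<Rightarrow> 'a \<Rightarrow> bool) \<Rightarrow> 'a set \<Rightarrow> ('a \<Rightarrow> 'a set \<Rightarrow> real)
                 \<Rightarrow> nat \<Rightarrow> nat \<Rightarrow> nat \<Rightarrow> (nat \<Rightarrow> nat \<Rightarrow> 'a) \<Rightarrow> real" where
  "expected_xi E V f p q n w =
     (let Bs = PiE {1..n} (\<lambda>_. psubsets (p + q) p)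
      in (\<Sum>B\<in>Bs. xi E V f p q n (restrT w n B)) / real (card Bs))"

end

theory Submission
  imports Defs
begin

lemma weight_bound:
  assumes finV: "finite V" and uY: "u \<notin> Y"
  shows "\<bar>f v (Y \<inter> nbhd E V v) - f v (insert u Y \<inter> nbhd E V v)\<bar> \<le> weight E V f v u"
proof (cases "u \<in> nbhd E V v")
  case True
  let ?X = "Y \<inter> nbhd E V v"
  have eq: "insert u Y \<inter> nbhd E V v = ?X \<union> {u}" using True by auto
  have mem: "?X \<in> {A. A \<subseteq> nbhd E V v - {u}}" using uY by auto
  have "{A. A \<subseteq> nbhd E V v - {u}} = Pow (nbhd E V v - {u})" by auto
  hence fin: "finite {A. A \<subseteq> nbhd E V v - {u}}" using finV by (simp add: nbhd_def)
  have bdd: "bdd_above ((\<lambda>A. \<bar>f v A - f v (A \<union> {u})\<bar>) ` {A. A \<subseteq> nbhd E V v - {u}})"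
    using fin by (intro bdd_above_finite finite_imageI)
  show ?thesis unfolding weight_def using True eq cSUP_upper[OF mem bdd] by simp
next
  case False
  then have "insert u Y \<inter> nbhd E V v = Y \<inter> nbhd E V v" by auto
  then show ?thesis using False by (simp add: weight_def)
qed

lemma PiE_psub:
  assumes "B \<in> PiE {1..n} (\<lambda>_. psubsets r p)" "l \<in> {1..n}"
  shows "B l \<subseteq> {1..r}" "card (B l) = p"
  using PiE_mem[OF assms] by (auto simp: psubsets_def)

lemma Tmem:
  assumes inj: "inj_on (\<lambda>(i,j). w i j) ({1..n}\<times>{1..r})"
    and B: "B \<in> PiE {1..n} (\<lambda>_. psubsets r p)" and i: "i\<in>{1..n}" and m: "m\<in>{1..r}"
  shows "w i m \<in> restrT w n B \<longleftrightarrow> m \<in> B i"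
proof
  assume "w i m \<in> restrT w n B"
  then obtain l m' where l: "l\<in>{1..n}" "m'\<in>B l" "w i m = w l m'" by (auto simp: restrT_def)
  have "m' \<in> {1..r}" using PiE_psub(1)[OF B l(1)] l by auto
  hence "(i,m) = (l,m')" using inj_onD[OF inj, of "(i,m)" "(l,m')"] l i m by auto
  thus "m \<in> B i" using l by auto
next
  assume "m \<in> B i" thus "w i m \<in> restrT w n B" using i by (auto simp: restrT_def)
qed

lemma Tswap:
  assumes inj: "inj_on (\<lambda>(i,j). w i j) ({1..n}\<times>{1..r})"
    and B: "B \<in> PiE {1..n} (\<lambda>_. psubsets r p)" and i: "i\<in>{1..n}"
    and j: "j \<in> B i" and k: "k\<in>{1..r}"
  shows "restrT w n (B(i := insert k (B i - {j}))) = insert (w i k) (restrT w n B - {w i j})"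
proof -
  have injD: "a = c \<and> b = d" if "a\<in>{1..n}" "b\<in>{1..r}" "c\<in>{1..n}" "d\<in>{1..r}" "w a b = w c d" for a b c d
    using inj_onD[OF inj, of "(a,b)" "(c,d)"] that by auto
  have sub: "B l \<subseteq> {1..r}" if "l\<in>{1..n}" for l using PiE_psub(1)[OF B that] .
  have jr: "j \<in> {1..r}" using sub[OF i] j by auto
  show ?thesis
  proof (rule set_eqI, rule iffI)
    fix x assume "x \<in> restrT w n (B(i := insert k (B i - {j})))"
    then obtain l m where lm: "x = w l m" "l\<in>{1..n}" "m \<in> (B(i := insert k (B i - {j}))) l"
      by (auto simp: restrT_def)
    show "x \<in> insert (w i k) (restrT w n B - {w i j})"
    proof (cases "l = i")
      case True
      show ?thesis
      proof (cases "m = k")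
        case True thus ?thesis using lm \<open>l = i\<close> by simp
      next
        case False
        hence m: "m \<in> B i" "m \<noteq> j" using lm \<open>l = i\<close> by auto
        have "w i m \<noteq> w i j" using injD[OF i _ i jr] m sub[OF i] by blast
        moreover have "w i m \<in> restrT w n B" using m i by (auto simp: restrT_def)
        ultimately show ?thesis using lm \<open>l = i\<close> by simp
      qed
    next
      case False
      hence m: "m \<in> B l" using lm by auto
      have "w l m \<noteq> w i j" using injD[OF lm(2) _ i jr] m sub[OF lm(2)] False by blast
      moreover have "w l m \<in> restrT w n B" using m lm(2) by (auto simp: restrT_def)
      ultimately show ?thesis using lm by simp
    qed
  next
    fix x assume x: "x \<in> insert (w i k) (restrT w n B - {w i j})"
    show "x \<in> restrT w n (B(i := insert k (B i - {j})))"
    proof (cases "x = w i k")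
      case True thus ?thesis using i by (auto simp: restrT_def)
    next
      case False
      then obtain l m where lm: "x = w l m" "l\<in>{1..n}" "m \<in> B l" "x \<noteq> w i j"
        using x by (auto simp: restrT_def)
      have "m \<in> (B(i := insert k (B i - {j}))) l" using lm by auto
      thus ?thesis using lm by (auto simp: restrT_def)
    qed
  qed
qed


lemma finite_psub: "finite (psubsets r p)"
proof -
  have "psubsets r p \<subseteq> Pow {1..r}" by (auto simp: psubsets_def)
  thus ?thesis by (rule finite_subset) simp
qed

lemma vertex_bound:
  assumes inj: "inj_on (\<lambda>(i,j). w i j) ({1..n}\<times>{1..r})"
    and irr: "\<And>v. \<not> E v v" and finV: "finite V" and r: "r = p + q"
    and i: "i\<in>{1..n}" and j: "j\<in>{1..r}"
    and Bs: "Bs = PiE {1..n} (\<lambda>_. psubsets r p)"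
  shows "\<bar>\<Sum>B\<in>Bs. sgn_T p q (restrT w n B) (w i j) * f (w i j) (restrT w n B \<inter> nbhd E V (w i j))\<bar>
     \<le> (\<Sum>k\<in>{1..r}-{j}. weight E V f (w i j) (w i k) * real (card {B\<in>Bs. j\<in>B i \<and> k\<notin>B i}))"
proof -
  define v where "v = w i j"
  define h where "h B = f v (restrT w n B \<inter> nbhd E V v)" for B
  define sw where "sw B k = B(i := insert k (B i - {j}))" for B k
  define Bj where "Bj = {B\<in>Bs. j\<in>B i}"
  define Bn where "Bn = {B\<in>Bs. j\<notin>B i}"
  define S1 where "S1 = Sigma Bj (\<lambda>B. {1..r} - B i)"
  define S2 where "S2 = Sigma Bn (\<lambda>B. B i)"
  have finBs: "finite Bs" unfolding Bs using finite_psub by (intro finite_PiE) auto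
  have finBj: "finite Bj" "finite Bn" using finBs by (auto simp: Bj_def Bn_def)
  have Bsub: "B l \<subseteq> {1..r}" and Bcard: "card (B l) = p" if "B\<in>Bs" "l\<in>{1..n}" for B l
    using PiE_psub[of B n r p l] that Bs by auto
  have sgn: "sgn_T p q (restrT w n B) v = (if j \<in> B i then real q else - real p)" if "B\<in>Bs" for B
    using Tmem[OF inj _ i j, of B p] that Bs by (simp add: sgn_T_def v_def)
  have eq1: "(\<Sum>B\<in>Bs. sgn_T p q (restrT w n B) v * h B)
      = (\<Sum>B\<in>Bj. real q * h B) - (\<Sum>B\<in>Bn. real p * h B)"
  proof -
    have "(\<Sum>B\<in>Bs. sgn_T p q (restrT w n B) v * h B)
        = (\<Sum>B\<in>Bs. if j \<in> B i then real q * h B else - (real p * h B))"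
      by (rule sum.cong) (auto simp: sgn)
    also have "\<dots> = (\<Sum>B\<in>Bj. real q * h B) + (\<Sum>B\<in>Bn. - (real p * h B))"
      unfolding sum.If_cases[OF finBs] Bj_def Bn_def
      by (intro arg_cong2[where f="(+)"] sum.cong) auto
    finally show ?thesis by (simp add: sum_negf)
  qed
  have eq2: "(\<Sum>B\<in>Bj. real q * h B) = (\<Sum>(B,k)\<in>S1. h B)"
  proof -
    have "(\<Sum>B\<in>Bj. real q * h B) = (\<Sum>B\<in>Bj. \<Sum>k\<in>{1..r} - B i. h B)"
    proof (rule sum.cong)
      fix B assume "B \<in> Bj"
      hence "card ({1..r} - B i) = q" using Bsub[of B i] Bcard[of B i] i r
        by (auto simp: Bj_def card_Diff_subset finite_subset)
      thus "real q * h B = (\<Sum>k\<in>{1..r} - B i. h B)" by simp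
    qed simp
    also have "\<dots> = (\<Sum>(B,k)\<in>S1. h B)" unfolding S1_def
      using finBj by (subst sum.Sigma) auto
    finally show ?thesis .
  qed
  have eq3: "(\<Sum>B\<in>Bn. real p * h B) = (\<Sum>(B,k)\<in>S2. h B)"
  proof -
    have "(\<Sum>B\<in>Bn. real p * h B) = (\<Sum>B\<in>Bn. \<Sum>k\<in>B i. h B)"
    proof (rule sum.cong)
      fix B assume "B \<in> Bn"
      hence "card (B i) = p" using Bcard[of B i] i by (auto simp: Bn_def)
      thus "real p * h B = (\<Sum>k\<in>B i. h B)" by simp
    qed simp
    also have "\<dots> = (\<Sum>(B,k)\<in>S2. h B)" unfolding S2_def
      using finBj Bsub i by (subst sum.Sigma) (auto simp: Bn_def intro: finite_subset)
    finally show ?thesis .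
  qed
  have inS: "sw B k \<in> Bs" if "(B,k) \<in> S1" for B k
  proof -
    have B: "B \<in> Bs" "j \<in> B i" "k \<in> {1..r}" "k \<notin> B i" using that by (auto simp: S1_def Bj_def)
    have fin: "finite (B i)" using Bsub[OF B(1) i] finite_subset by blast
    have "card (B i) > 0" using fin B(2) by (auto simp: card_gt_0_iff)
    have "insert k (B i - {j}) \<in> psubsets r p"
      using Bsub[OF B(1) i] Bcard[OF B(1) i] B fin \<open>card (B i) > 0\<close> by (auto simp: psubsets_def card_insert_if)
    moreover have "B \<in> PiE {1..n} (\<lambda>_. psubsets r p)" using B Bs by simp
    ultimately show ?thesis unfolding sw_def Bs using i
      by (auto simp: PiE_def Pi_def extensional_def)
  qed
  have inS': "B(i := insert j (B i - {k})) \<in> Bs" if "(B,k) \<in> S2" for B k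
  proof -
    have B: "B \<in> Bs" "j \<notin> B i" "k \<in> B i" using that by (auto simp: S2_def Bn_def)
    have fin: "finite (B i)" using Bsub[OF B(1) i] finite_subset by blast
    have "card (B i) > 0" using fin B(3) by (auto simp: card_gt_0_iff)
    have "insert j (B i - {k}) \<in> psubsets r p"
      using Bsub[OF B(1) i] Bcard[OF B(1) i] B fin j \<open>card (B i) > 0\<close> by (auto simp: psubsets_def card_insert_if)
    moreover have "B \<in> PiE {1..n} (\<lambda>_. psubsets r p)" using B Bs by simp
    ultimately show ?thesis unfolding Bs using i
      by (auto simp: PiE_def Pi_def extensional_def)
  qed
  have bij: "bij_betw (\<lambda>(B,k). (sw B k, k)) S1 S2"
  proof (rule bij_betw_byWitness[where f'="\<lambda>(B,k). (B(i := insert j (B i - {k})), k)"])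
    show "\<forall>a\<in>S1. (\<lambda>(B,k). (B(i := insert j (B i - {k})), k)) ((\<lambda>(B,k). (sw B k, k)) a) = a"
    proof
      fix a assume "a \<in> S1"
      then obtain B k where a: "a = (B,k)" "j \<in> B i" "k \<notin> B i" by (auto simp: S1_def Bj_def)
      have "insert j (insert k (B i - {j}) - {k}) = B i" using a by auto
      thus "(\<lambda>(B,k). (B(i := insert j (B i - {k})), k)) ((\<lambda>(B,k). (sw B k, k)) a) = a"
        using a by (auto simp: sw_def)
    qed
    show "\<forall>a\<in>S2. (\<lambda>(B,k). (sw B k, k)) ((\<lambda>(B,k). (B(i := insert j (B i - {k})), k)) a) = a"
    proof
      fix a assume "a \<in> S2"
      then obtain B k where a: "a = (B,k)" "j \<notin> B i" "k \<in> B i" by (auto simp: S2_def Bn_def)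
      have "insert k (insert j (B i - {k}) - {j}) = B i" using a by auto
      thus "(\<lambda>(B,k). (sw B k, k)) ((\<lambda>(B,k). (B(i := insert j (B i - {k})), k)) a) = a"
        using a by (auto simp: sw_def)
    qed
    show "(\<lambda>(B,k). (sw B k, k)) ` S1 \<subseteq> S2"
    proof
      fix x assume "x \<in> (\<lambda>(B,k). (sw B k, k)) ` S1"
      then obtain B k where bk: "(B,k) \<in> S1" "x = (sw B k, k)" by auto
      thus "x \<in> S2" using inS[OF bk(1)] by (auto simp: S1_def S2_def Bj_def Bn_def sw_def)
    qed
    show "(\<lambda>(B,k). (B(i := insert j (B i - {k})), k)) ` S2 \<subseteq> S1"
    proof
      fix x assume "x \<in> (\<lambda>(B,k). (B(i := insert j (B i - {k})), k)) ` S2"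
      then obtain B k where bk: "(B,k) \<in> S2" "x = (B(i := insert j (B i - {k})), k)" by auto
      have "k \<in> {1..r}" "k \<noteq> j" using bk Bsub[of B i] i by (auto simp: S2_def Bn_def)
      thus "x \<in> S1" using inS'[OF bk(1)] bk j by (auto simp: S1_def S2_def Bj_def Bn_def)
    qed
  qed
  have eq4: "(\<Sum>(B,k)\<in>S2. h B) = (\<Sum>(B,k)\<in>S1. h (sw B k))"
    using sum.reindex_bij_betw[OF bij, of "\<lambda>(B,k). h B"] by (simp add: case_prod_beta)
  have bnd: "\<bar>h B - h (sw B k)\<bar> \<le> weight E V f v (w i k)" if "(B,k) \<in> S1" for B k
  proof -
    have B: "B \<in> Bs" "j \<in> B i" "k \<in> {1..r}" "k \<notin> B i" using that by (auto simp: S1_def Bj_def)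
    have T: "restrT w n (sw B k) = insert (w i k) (restrT w n B - {w i j})"
      unfolding sw_def using Tswap[OF inj, of B p i j k] i B Bs by simp
    have vn: "w i j \<notin> nbhd E V v" using irr by (simp add: nbhd_def v_def)
    have T2: "restrT w n B \<inter> nbhd E V v = (restrT w n B - {w i j}) \<inter> nbhd E V v" using vn by auto
    have u: "w i k \<notin> restrT w n B - {w i j}" using Tmem[OF inj, of B p i k] i B Bs by simp
    show ?thesis unfolding h_def T T2 using weight_bound[OF finV u] by simp
  qed
  have finS1: "finite S1" unfolding S1_def using finBj by auto
  have "(\<Sum>B\<in>Bs. sgn_T p q (restrT w n B) v * h B) = (\<Sum>(B,k)\<in>S1. h B - h (sw B k))"
    unfolding eq1 eq2 eq3 eq4 by (simp add: sum_subtractf case_prod_beta)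
  moreover have "\<bar>\<Sum>(B,k)\<in>S1. h B - h (sw B k)\<bar> \<le> (\<Sum>(B,k)\<in>S1. \<bar>h B - h (sw B k)\<bar>)"
    by (rule order_trans[OF sum_abs]) (simp add: case_prod_beta)
  moreover have "(\<Sum>(B,k)\<in>S1. \<bar>h B - h (sw B k)\<bar>) \<le> (\<Sum>(B,k)\<in>S1. weight E V f v (w i k))"
    by (rule sum_mono) (use bnd in auto)
  ultimately have "\<bar>\<Sum>B\<in>Bs. sgn_T p q (restrT w n B) v * h B\<bar> \<le> (\<Sum>(B,k)\<in>S1. weight E V f v (w i k))"
    by linarith
  also have "(\<Sum>(B,k)\<in>S1. weight E V f v (w i k)) = (\<Sum>B\<in>Bj. \<Sum>k\<in>{k\<in>{1..r}-{j}. k \<notin> B i}. weight E V f v (w i k))"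
    unfolding S1_def using finBj
    by (subst sum.Sigma[symmetric]) (auto intro!: sum.cong simp: Bj_def)
  also have "\<dots> = (\<Sum>k\<in>{1..r}-{j}. \<Sum>B\<in>{B\<in>Bj. k \<notin> B i}. weight E V f v (w i k))"
    using finBj by (subst sum.swap_restrict) auto
  also have "\<dots> = (\<Sum>k\<in>{1..r}-{j}. weight E V f (w i j) (w i k) * real (card {B\<in>Bs. j\<in>B i \<and> k\<notin>B i}))"
  proof (rule sum.cong)
    fix k
    have "{B\<in>Bj. k \<notin> B i} = {B\<in>Bs. j\<in>B i \<and> k\<notin>B i}" by (auto simp: Bj_def)
    thus "(\<Sum>B\<in>{B\<in>Bj. k \<notin> B i}. weight E V f v (w i k)) = weight E V f (w i j) (w i k) * real (card {B\<in>Bs. j\<in>B i \<and> k\<notin>B i})"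
      by (simp add: v_def)
  qed simp
  finally show ?thesis unfolding h_def v_def .
qed


lemma binom_id:
  fixes r p q :: nat
  assumes r: "r = p + q" and p: "p > 0" and q: "q > 0"
  shows "(r choose p) * p * q = ((r - 2) choose (p - 1)) * r * (r - 1)"
proof -
  obtain p1 where p1: "p = Suc p1" using p by (cases p) auto
  define r1 where "r1 = r - 1"
  have r1: "r = Suc r1" using r p by (simp add: r1_def)
  have a: "Suc p1 * (Suc r1 choose Suc p1) = Suc r1 * (r1 choose p1)" by (rule Suc_times_binomial)
  have b: "(r1 - p1) * (r1 choose p1) = r1 * (r1 - 1 choose p1)" by (rule binomial_absorb_comp)
  have q': "r1 - p1 = q" using r r1 p1 by simp
  have "(r choose p) * p * q = (Suc p1 * (Suc r1 choose Suc p1)) * q" using p1 r1 by simp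
  also have "\<dots> = Suc r1 * ((r1 - p1) * (r1 choose p1))" unfolding a q' by (simp only: mult.commute mult.left_commute)
  also have "\<dots> = Suc r1 * (r1 * (r1 - 1 choose p1))" unfolding b ..
  finally show ?thesis using p1 r1 by (simp add: mult.commute mult.left_commute)
qed

lemma count_lemma:
  fixes r p q n i j k :: nat
  assumes r: "r = p + q" and p: "p > 0" and q: "q > 0"
    and i: "i \<in> {1..n}" and j: "j\<in>{1..r}" and k: "k\<in>{1..r}" and jk: "j \<noteq> k"
    and Bs: "Bs = PiE {1..n} (\<lambda>_. psubsets r p)"
  shows "real (card {B\<in>Bs. j\<in>B i \<and> k\<notin>B i}) = real (card Bs) * (real p * real q / (real r * (real r - 1)))"
proof -
  define P where "P = psubsets r p"
  define Pjk where "Pjk = {X\<in>P. j\<in>X \<and> k\<notin>X}"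
  define Q where "Q = {Y. Y \<subseteq> {1..r} - {j,k} \<and> card Y = p - 1}"
  have setq: "{B\<in>Bs. j\<in>B i \<and> k\<notin>B i} = PiE {1..n} (\<lambda>l. if l = i then Pjk else P)"
    unfolding Bs P_def Pjk_def using i by (auto simp: PiE_def Pi_def)
  have prodeq: "(\<Prod>l\<in>{1..n}. card (if l = i then Pjk else P)) = card Pjk * card P ^ (n - 1)"
  proof -
    have "(\<Prod>l\<in>{1..n}. card (if l = i then Pjk else P)) = card (if i = i then Pjk else P) * (\<Prod>l\<in>{1..n}-{i}. card (if l = i then Pjk else P))"
      using i by (subst prod.remove) auto
    also have "(\<Prod>l\<in>{1..n}-{i}. card (if l = i then Pjk else P)) = (\<Prod>l\<in>{1..n}-{i}. card P)"
      by (rule prod.cong) auto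
    finally show ?thesis using i by simp
  qed
  have n1: "n \<ge> 1" using i by auto
  have cBs: "card Bs = card P * card P ^ (n - 1)"
    unfolding Bs P_def using n1 by (simp add: card_PiE power_Suc[symmetric])
  have cP: "card P = r choose p" unfolding P_def psubsets_def using n_subsets[of "{1..r}" p] by simp
  have PjkQ: "Pjk = insert j ` Q"
  proof
    show "Pjk \<subseteq> insert j ` Q"
    proof
      fix X assume X: "X \<in> Pjk"
      hence X': "X \<subseteq> {1..r}" "card X = p" "j \<in> X" "k \<notin> X" by (auto simp: Pjk_def P_def psubsets_def)
      have fX: "finite X" using X' finite_subset by blast
      have "X - {j} \<in> Q" using X' fX by (auto simp: Q_def)
      moreover have "X = insert j (X - {j})" using X' by auto
      ultimately show "X \<in> insert j ` Q" by blast
    qed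
  next
    show "insert j ` Q \<subseteq> Pjk"
    proof
      fix X assume "X \<in> insert j ` Q"
      then obtain Y where Y: "Y \<subseteq> {1..r} - {j,k}" "card Y = p - 1" "X = insert j Y" by (auto simp: Q_def)
      have fY: "finite Y" using Y finite_subset by blast
      have "card X = p" using Y fY p by (auto simp: card_insert_if)
      thus "X \<in> Pjk" using Y j jk by (auto simp: Pjk_def P_def psubsets_def)
    qed
  qed
  have injQ: "inj_on (insert j) Q"
  proof (rule inj_onI)
    fix X Y assume "X \<in> Q" "Y \<in> Q" "insert j X = insert j Y"
    thus "X = Y" by (auto simp: Q_def)
  qed
  have cD: "card ({1..r} - {j,k}) = r - 2" using j k jk by (simp add: card_Diff_subset)
  have cPjk: "card Pjk = (r - 2) choose (p - 1)"
    unfolding PjkQ card_image[OF injQ] unfolding Q_def using n_subsets[of "{1..r} - {j,k}" "p - 1"] cD by simp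
  have id: "real (r choose p) * real p * real q = real ((r - 2) choose (p - 1)) * real r * (real r - 1)"
  proof -
    have "real ((r choose p) * p * q) = real (((r - 2) choose (p - 1)) * r * (r - 1))"
      using binom_id[OF r p q] by simp
    moreover have "real (r - 1) = real r - 1" using r p by simp
    ultimately show ?thesis by (simp only: of_nat_mult)
  qed
  have rpos: "real r * (real r - 1) > 0" using r p q by simp
  have "real (card {B\<in>Bs. j\<in>B i \<and> k\<notin>B i}) = real ((r - 2) choose (p - 1)) * real (card P ^ (n - 1))"
    unfolding setq card_PiE[OF finite_atLeastAtMost] prodeq cPjk by simp
  also have "\<dots> = real (card Bs) * (real p * real q / (real r * (real r - 1)))"
  proof -
    define C where "C = real (r choose p)"
    define C2 where "C2 = real ((r - 2) choose (p - 1))"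
    define M where "M = real (card P ^ (n - 1))"
    define D where "D = real r * (real r - 1)"
    have id': "C * (real p * real q) = C2 * D" using id unfolding C_def C2_def D_def by (simp add: mult.assoc)
    have "real (card Bs) * (real p * real q / (real r * (real r - 1))) = M * (C * (real p * real q)) / D"
      unfolding cBs cP C_def M_def D_def by simp
    also have "\<dots> = C2 * M" unfolding id' using rpos unfolding D_def[symmetric] by simp
    finally show ?thesis unfolding C2_def M_def by simp
  qed
  finally show ?thesis .
qed


lemma pair_sum:
  fixes a :: "nat \<Rightarrow> nat \<Rightarrow> real"
  shows "(\<Sum>j\<in>{1..r}. \<Sum>j'\<in>{j<..r}. a j j' + a j' j) = (\<Sum>j\<in>{1..r}. \<Sum>k\<in>{1..r}-{j}. a j k)"
proof -
  have s1: "{j<..r} = {k\<in>{1..r}. j < k}" if "j \<in> {1..r}" for j using that by auto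
  have "(\<Sum>j\<in>{1..r}. \<Sum>j'\<in>{j<..r}. a j' j) = (\<Sum>j\<in>{1..r}. \<Sum>j'\<in>{k\<in>{1..r}. j < k}. a j' j)"
    by (rule sum.cong) (auto simp: s1)
  also have "\<dots> = (\<Sum>j'\<in>{1..r}. \<Sum>j\<in>{j\<in>{1..r}. j < j'}. a j' j)"
    by (rule sum.swap_restrict) auto
  finally have A: "(\<Sum>j\<in>{1..r}. \<Sum>j'\<in>{j<..r}. a j' j) = (\<Sum>j\<in>{1..r}. \<Sum>k\<in>{k\<in>{1..r}. k < j}. a j k)" .
  have B: "(\<Sum>j\<in>{1..r}. \<Sum>j'\<in>{j<..r}. a j j') = (\<Sum>j\<in>{1..r}. \<Sum>k\<in>{k\<in>{1..r}. j < k}. a j k)"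
    by (rule sum.cong) (auto simp: s1)
  have C: "(\<Sum>k\<in>{1..r}-{j}. a j k) = (\<Sum>k\<in>{k\<in>{1..r}. j < k}. a j k) + (\<Sum>k\<in>{k\<in>{1..r}. k < j}. a j k)" for j
  proof -
    have e: "{1..r}-{j} = {k\<in>{1..r}. j < k} \<union> {k\<in>{1..r}. k < j}" by auto
    show ?thesis unfolding e by (rule sum.union_disjoint) auto
  qed
  show ?thesis unfolding sum.distrib A B C by simp
qed


theorem mainTheorem14:
  fixes E :: "'a \<Rightarrow> 'a \<Rightarrow> bool" and V :: "'a set"
    and f :: "'a \<Rightarrow> 'a set \<Rightarrow> real"
    and n p q :: nat and w :: "nat \<Rightarrow> nat \<Rightarrow> 'a"
  assumes "n > 0" and "p > 0" and "q > 0"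
    and "finite V"
    and "\<And>u v. E u v \<Longrightarrow> E v u"
    and "\<And>v. \<not> E v v"
    and "card V = (p + q) * n"
    and "\<And>v. f v {} = 0"
    and "bij_betw (\<lambda>(i, j). w i j) ({1..n} \<times> {1..p + q}) V"
  shows "\<bar>expected_xi E V f p q n w\<bar>
         \<le> 1 / (real n * real (p + q) * (real (p + q) - 1)) *
           (\<Sum>i\<in>{1..n}. \<Sum>j\<in>{1..p + q}. \<Sum>j'\<in>{j<..p + q}.
               weight E V f (w i j) (w i j') + weight E V f (w i j') (w i j))"
proof -
  define r where "r = p + q"
  define Bs where "Bs = PiE {1..n} (\<lambda>_. psubsets r p)"
  define c where "c = 1 / (real p * real q * real n)"
  define g where "g B v = sgn_T p q (restrT w n B) v * f v (restrT w n B \<inter> nbhd E V v)" for B v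
  define Wt where "Wt i j = (\<Sum>k\<in>{1..r}-{j}. weight E V f (w i j) (w i k))" for i j
  define K where "K = real p * real q / (real r * (real r - 1))"
  have bij: "bij_betw (\<lambda>(i, j). w i j) ({1..n} \<times> {1..r}) V" using assms(9) by (simp add: r_def)
  have inj: "inj_on (\<lambda>(i, j). w i j) ({1..n} \<times> {1..r})" using bij_betw_imp_inj_on[OF bij] .
  have finBs: "finite Bs" unfolding Bs_def using finite_psub by (intro finite_PiE) auto
  have cP: "card (psubsets r p) = r choose p" unfolding psubsets_def using n_subsets[of "{1..r}" p] by simp
  have cBs: "card Bs = (r choose p) ^ n" unfolding Bs_def by (simp add: card_PiE cP)
  have cpos: "real (card Bs) > 0" unfolding cBs r_def by (simp add: zero_less_binomial_iff)
  have ex: "expected_xi E V f p q n w = (\<Sum>B\<in>Bs. xi E V f p q n (restrT w n B)) / real (card Bs)"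
    unfolding expected_xi_def Bs_def r_def Let_def by simp
  have "(\<Sum>B\<in>Bs. xi E V f p q n (restrT w n B)) = c * (\<Sum>B\<in>Bs. \<Sum>v\<in>V. g B v)"
    unfolding xi_def g_def c_def sum_distrib_left by simp
  also have "(\<Sum>B\<in>Bs. \<Sum>v\<in>V. g B v) = (\<Sum>v\<in>V. \<Sum>B\<in>Bs. g B v)" by (rule sum.swap)
  also have "\<dots> = (\<Sum>x\<in>{1..n} \<times> {1..r}. \<Sum>B\<in>Bs. g B ((\<lambda>(i, j). w i j) x))"
    by (rule sum.reindex_bij_betw[OF bij, symmetric])
  also have "\<dots> = (\<Sum>(i,j)\<in>{1..n} \<times> {1..r}. \<Sum>B\<in>Bs. g B (w i j))"
    by (rule sum.cong) auto
  also have "\<dots> = (\<Sum>i\<in>{1..n}. \<Sum>j\<in>{1..r}. \<Sum>B\<in>Bs. g B (w i j))"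
    by (rule sum.cartesian_product[symmetric])
  finally have sx: "(\<Sum>B\<in>Bs. xi E V f p q n (restrT w n B)) = c * (\<Sum>i\<in>{1..n}. \<Sum>j\<in>{1..r}. \<Sum>B\<in>Bs. g B (w i j))" .
  have bij_bnd: "\<bar>\<Sum>B\<in>Bs. g B (w i j)\<bar> \<le> real (card Bs) * K * Wt i j" if i: "i\<in>{1..n}" and j: "j\<in>{1..r}" for i j
  proof -
    have "\<bar>\<Sum>B\<in>Bs. g B (w i j)\<bar> \<le> (\<Sum>k\<in>{1..r}-{j}. weight E V f (w i j) (w i k) * real (card {B\<in>Bs. j\<in>B i \<and> k\<notin>B i}))"
      unfolding g_def by (rule vertex_bound[OF inj assms(6) assms(4) r_def i j Bs_def])
    also have "\<dots> = (\<Sum>k\<in>{1..r}-{j}. weight E V f (w i j) (w i k) * (real (card Bs) * K))"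
    proof (rule sum.cong)
      fix k assume k: "k \<in> {1..r}-{j}"
      hence "real (card {B\<in>Bs. j\<in>B i \<and> k\<notin>B i}) = real (card Bs) * K"
        unfolding K_def using count_lemma[OF r_def assms(2) assms(3) i j _ _ Bs_def, of k] by auto
      thus "weight E V f (w i j) (w i k) * real (card {B\<in>Bs. j\<in>B i \<and> k\<notin>B i}) = weight E V f (w i j) (w i k) * (real (card Bs) * K)"
        by simp
    qed simp
    also have "\<dots> = real (card Bs) * K * Wt i j" unfolding Wt_def sum_distrib_left
      by (rule sum.cong) auto
    finally show ?thesis .
  qed
  have c0: "c \<ge> 0" unfolding c_def by simp
  have "\<bar>\<Sum>B\<in>Bs. xi E V f p q n (restrT w n B)\<bar> = c * \<bar>\<Sum>i\<in>{1..n}. \<Sum>j\<in>{1..r}. \<Sum>B\<in>Bs. g B (w i j)\<bar>"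
    unfolding sx using c0 by (simp add: abs_mult)
  also have "\<bar>\<Sum>i\<in>{1..n}. \<Sum>j\<in>{1..r}. \<Sum>B\<in>Bs. g B (w i j)\<bar> \<le> (\<Sum>i\<in>{1..n}. \<Sum>j\<in>{1..r}. real (card Bs) * K * Wt i j)"
  proof -
    have "\<bar>\<Sum>i\<in>{1..n}. \<Sum>j\<in>{1..r}. \<Sum>B\<in>Bs. g B (w i j)\<bar> \<le> (\<Sum>i\<in>{1..n}. \<bar>\<Sum>j\<in>{1..r}. \<Sum>B\<in>Bs. g B (w i j)\<bar>)"
      by (rule sum_abs)
    also have "\<dots> \<le> (\<Sum>i\<in>{1..n}. \<Sum>j\<in>{1..r}. \<bar>\<Sum>B\<in>Bs. g B (w i j)\<bar>)"
      by (rule sum_mono) (rule sum_abs)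
    also have "\<dots> \<le> (\<Sum>i\<in>{1..n}. \<Sum>j\<in>{1..r}. real (card Bs) * K * Wt i j)"
      by (intro sum_mono bij_bnd)
    finally show ?thesis .
  qed
  finally have "\<bar>\<Sum>B\<in>Bs. xi E V f p q n (restrT w n B)\<bar> \<le> c * (\<Sum>i\<in>{1..n}. \<Sum>j\<in>{1..r}. real (card Bs) * K * Wt i j)"
    using c0 by (simp add: mult_left_mono)
  also have "\<dots> = real (card Bs) * (c * K * (\<Sum>i\<in>{1..n}. \<Sum>j\<in>{1..r}. Wt i j))"
    by (simp add: sum_distrib_left mult_ac)
  finally have S: "\<bar>\<Sum>B\<in>Bs. xi E V f p q n (restrT w n B)\<bar> \<le> real (card Bs) * (c * K * (\<Sum>i\<in>{1..n}. \<Sum>j\<in>{1..r}. Wt i j))" .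
  have "\<bar>expected_xi E V f p q n w\<bar> = \<bar>\<Sum>B\<in>Bs. xi E V f p q n (restrT w n B)\<bar> / real (card Bs)"
    unfolding ex abs_divide using cpos by simp
  also have "\<dots> \<le> c * K * (\<Sum>i\<in>{1..n}. \<Sum>j\<in>{1..r}. Wt i j)"
    using S cpos by (simp add: pos_divide_le_eq mult.commute[of "real (card Bs)"])
  also have "c * K = 1 / (real n * real r * (real r - 1))"
    unfolding c_def K_def using assms(2) assms(3) by (simp add: field_simps)
  also have "(\<Sum>i\<in>{1..n}. \<Sum>j\<in>{1..r}. Wt i j) = (\<Sum>i\<in>{1..n}. \<Sum>j\<in>{1..p + q}. \<Sum>j'\<in>{j<..p + q}.
               weight E V f (w i j) (w i j') + weight E V f (w i j') (w i j))"
  proof (rule sum.cong)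
    fix i
    show "(\<Sum>j\<in>{1..r}. Wt i j) = (\<Sum>j\<in>{1..p + q}. \<Sum>j'\<in>{j<..p + q}.
               weight E V f (w i j) (w i j') + weight E V f (w i j') (w i j))"
      unfolding Wt_def r_def by (rule pair_sum[of "\<lambda>j k. weight E V f (w i j) (w i k)", symmetric])
  qed simp
  finally show ?thesis unfolding r_def by simp
qed

end
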